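(* Let $\mathbf{A} \in \mathbb{R}^{n\times n}$ be invertible and let $\hat{\mathbf{A}}$ be a random $n\times n$ real matrix, invertible almost surely, such that $\mathbb{E}[\hat{\mathbf{A}}^{-2}]$ exists. Suppose the distribution of $\hat{\mathbf{A}}$ is symmetric about its mean (i.e. $\hat{\mathbf{A}} - \mathbf{A}$ and $\mathbf{A} - \hat{\mathbf{A}}$ have the same distribution) and $\mathbb{E}[\hat{\mathbf{A}}] = \mathbf{A}$. Let $\mathbf{b} \in \mathbb{R}^n$ be a random vector, independent of $\hat{\mathbf{A}}$, with nonsingular auto-correlation matrix $\mathbf{R} = \mathbb{E}[\mathbf{b}\mathbf{b}^T]$. For $\beta \in \mathbb{R}$ define the augmented inverse operator $$\tilde{\mathbf{A}}_\beta^{-1} = \hat{\mathbf{A}}^{-1} - \beta\hat{\mathbf{A}}^{-1}\mathbf{R}^{-1}$$ and the semi-Bayesian residual error $$E(\beta) = \mathbb{E}_{\mathbf{b}}\mathbb{E}_{\hat{\mathbf{A}}}\big[\|\tilde{\mathbf{A}}_\beta^{-1}\mathbf{b} - \mathbf{A}^{-1}\mathbf{b}\|^2_{\mathbf{A}^T\mathbf{A}}\big] = \mathbb{E}_{\hat{\mathbf{A}}}\big[\|\tilde{\mathbf{A}}_\beta^{-1} - \mathbf{A}^{-1}\|^2_{\mathbf{A}^T\mathbf{A},\mathbf{R}}\big].$$ Then the optimal augmentation factor $\beta^* = \arg\min_\beta E(\beta)$ is nonnegative.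
   Context: For a vector $\mathbf{v}$ and symmetric positive definite $\mathbf{B}$, $\|\mathbf{v}\|_{\mathbf{B}}^2 = \mathbf{v}^T\mathbf{B}\mathbf{v}$. For matrices, $\langle \mathbf{M}, \mathbf{N}\rangle_{\mathbf{B},\mathbf{R}} = \mathrm{tr}(\mathbf{R}^{1/2}\mathbf{M}^T\mathbf{B}\mathbf{N}\mathbf{R}^{1/2})$ and $\|\mathbf{M}\|_{\mathbf{B},\mathbf{R}}^2 = \langle \mathbf{M},\mathbf{M}\rangle_{\mathbf{B},\mathbf{R}}$. The minimizer of the quadratic $E(\beta)$ is $\beta^* = \mathbb{E}\langle \hat{\mathbf{K}}, \hat{\mathbf{A}}^{-1} - \mathbf{A}^{-1}\rangle_{\mathbf{A}^T\mathbf{A},\mathbf{R}} / \mathbb{E}\|\hat{\mathbf{K}}\|^2_{\mathbf{A}^T\mathbf{A},\mathbf{R}}$ with $\hat{\mathbf{K}} = \hat{\mathbf{A}}^{-1}\mathbf{R}^{-1}$. *)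

theory Defs
  imports "HOL-Probability.Probability"
begin

definition wnorm2 :: "real^'n^'n \<Rightarrow> real^'n \<Rightarrow> real" where
  "wnorm2 B v = v \<bullet> (B *v v)"

definition outer :: "real^'n \<Rightarrow> real^'n^'n" where
  "outer v = (\<chi> i j. v $ i * v $ j)"

definition aug_inv :: "real \<Rightarrow> real^'n^'n \<Rightarrow> real^'n^'n \<Rightarrow> real^'n^'n" where
  "aug_inv \<beta> R Ahat = matrix_inv Ahat - \<beta> *\<^sub>R (matrix_inv Ahat ** matrix_inv R)"

definition resid_err ::
  "'a measure \<Rightarrow> real^'n^'n \<Rightarrow> ('a \<Rightarrow> real^'n^'n) \<Rightarrow> ('a \<Rightarrow> real^'n) \<Rightarrow> real^'n^'n \<Rightarrow> real \<Rightarrow> real" where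
  "resid_err M A Ahat b R \<beta> =
     (\<integral>\<omega>. wnorm2 (transpose A ** A) (aug_inv \<beta> R (Ahat \<omega>) *v b \<omega> - matrix_inv A *v b \<omega>) \<partial>M)"

end

theory Submission imports Defs begin

lemma minv_lr:
  fixes X :: "real^'n^'n"
  assumes "invertible X"
  shows "X ** matrix_inv X = mat 1" "matrix_inv X ** X = mat 1"
  using someI_ex[OF assms[unfolded invertible_def]] unfolding matrix_inv_def by auto

lemma minv_sing:
  fixes X :: "real^'n^'n"
  assumes "\<not> invertible X"
  shows "matrix_inv X = (SOME Y::real^'n^'n. False)"
proof -
  have "(\<lambda>Y::real^'n^'n. X ** Y = mat 1 \<and> Y ** X = mat 1) = (\<lambda>Y. False)"
    using assms unfolding invertible_def by auto
  then show ?thesis unfolding matrix_inv_def by simp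
qed

lemma continuous_on_mmult[continuous_intros]:
  fixes f :: "'a::topological_space \<Rightarrow> real^'m^'n" and g :: "'a \<Rightarrow> real^'p^'m"
  assumes "continuous_on S f" "continuous_on S g"
  shows "continuous_on S (\<lambda>x. f x ** g x)"
  unfolding matrix_matrix_mult_def by (intro continuous_intros assms)

lemma continuous_on_mvmult[continuous_intros]:
  fixes f :: "'a::topological_space \<Rightarrow> real^'m^'n" and g :: "'a \<Rightarrow> real^'m"
  assumes "continuous_on S f" "continuous_on S g"
  shows "continuous_on S (\<lambda>x. f x *v g x)"
  unfolding matrix_vector_mult_def by (intro continuous_intros assms)

lemma continuous_on_det[continuous_intros]:
  fixes f :: "'a::topological_space \<Rightarrow> real^'n^'n"
  assumes "continuous_on S f"
  shows "continuous_on S (\<lambda>x. det (f x))"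
  unfolding det_def by (intro continuous_intros assms)

lemma continuous_on_transpose[continuous_intros]:
  fixes f :: "'a::topological_space \<Rightarrow> real^'m^'n"
  assumes "continuous_on S f"
  shows "continuous_on S (\<lambda>x. transpose (f x))"
  unfolding transpose_def by (intro continuous_intros assms)

definition inv_formula :: "real^'n^'n \<Rightarrow> real^'n^'n" where
  "inv_formula X = (\<chi> i j. det (\<chi> r c. if c = i then (if r = j then 1 else 0) else X$r$c) / det X)"

lemma minv_formula:
  fixes X :: "real^'n^'n"
  assumes "invertible X"
  shows "matrix_inv X = inv_formula X"
proof -
  have d: "det X \<noteq> 0" using assms invertible_det_nz by blast
  have "matrix_inv X $ k $ j = inv_formula X $ k $ j" for k j
  proof -
    let ?x = "(\<chi> k. matrix_inv X $ k $ j)"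
    let ?b = "(\<chi> r. if r = j then 1 else 0) :: real^'n"
    have "X *v ?x = ?b"
    proof -
      have "(X ** matrix_inv X) $ r $ j = mat 1 $ r $ j" for r using minv_lr(1)[OF assms] by simp
      then show ?thesis
        by (simp add: vec_eq_iff matrix_vector_mult_def matrix_matrix_mult_def mat_def)
    qed
    then have "?x = (\<chi> k. det(\<chi> i j. if j=k then ?b$i else X$i$j) / det X)"
      using cramer[OF d] by blast
    then have "?x $ k = (\<chi> k. det(\<chi> i j. if j=k then ?b$i else X$i$j) / det X) $ k" by simp
    moreover have "(\<chi> i ja. if ja = k then ?b $ i else X$i$ja) = (\<chi> r c. if c = k then (if r = j then 1 else 0) else X$r$c)"
      by (simp add: vec_eq_iff)
    ultimately show ?thesis unfolding inv_formula_def by simp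
  qed
  then show ?thesis by (simp add: vec_eq_iff)
qed

lemma cont_if_const[continuous_intros]:
  "continuous_on S f \<Longrightarrow> continuous_on S g \<Longrightarrow> continuous_on S (\<lambda>x. if P then f x else g x)"
  by (cases P) auto

lemma continuous_on_inv_formula:
  "continuous_on {X::real^'n^'n. det X \<noteq> 0} inv_formula"
  unfolding inv_formula_def
  by (intro continuous_intros) auto

lemma matrix_inv_measurable[measurable]:
  "(matrix_inv :: real^'n^'n \<Rightarrow> real^'n^'n) \<in> borel_measurable borel"
proof -
  let ?A = "{X::real^'n^'n. det X \<noteq> 0}"
  have eq: "matrix_inv = (\<lambda>X::real^'n^'n. if X \<in> ?A then inv_formula X else (SOME Y::real^'n^'n. False))"
    by (auto simp: fun_eq_iff minv_formula minv_sing invertible_det_nz)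
  have o: "open ?A"
    by (intro open_Collect_neq continuous_intros continuous_on_id) 
  show ?thesis
    unfolding eq
    by (intro borel_measurable_continuous_on_if continuous_on_inv_formula continuous_intros)
       (use o in auto)
qed

lemma norm_le_l1_gen: "norm (x::'a::real_normed_vector^'n) \<le> (\<Sum>i\<in>UNIV. norm (x$i))"
  by (simp add: norm_vec_def L2_set_le_sum)

lemma entry_le_norm: "\<bar>(X::real^'m^'n)$i$j\<bar> \<le> norm X"
  using component_le_norm_cart[of "X$i" j] Finite_Cartesian_Product.norm_nth_le[of X i] by linarith

lemma norm_mv_le:
  fixes X :: "real^'m^'n" and v :: "real^'m"
  shows "norm (X *v v) \<le> real CARD('n) * real CARD('m) * norm X * norm v"
proof -
  have c: "\<bar>(X *v v)$i\<bar> \<le> real CARD('m) * (norm X * norm v)" for i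
  proof -
    have "\<bar>(X *v v)$i\<bar> = \<bar>\<Sum>j\<in>UNIV. X$i$j * v$j\<bar>" by (simp add: matrix_vector_mult_def)
    also have "\<dots> \<le> (\<Sum>j\<in>UNIV. \<bar>X$i$j\<bar> * \<bar>v$j\<bar>)" by (rule order_trans[OF sum_abs]) (simp add: abs_mult)
    also have "\<dots> \<le> (\<Sum>j\<in>(UNIV::'m set). norm X * norm v)"
      by (intro sum_mono mult_mono entry_le_norm component_le_norm_cart) auto
    finally show ?thesis by simp
  qed
  have "norm (X *v v) \<le> (\<Sum>i\<in>UNIV. \<bar>(X *v v)$i\<bar>)" by (rule norm_le_l1_cart)
  also have "\<dots> \<le> (\<Sum>i\<in>(UNIV::'n set). real CARD('m) * (norm X * norm v))"
    by (intro sum_mono c)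
  finally show ?thesis by (simp add: mult_ac)
qed

lemma norm_mm_le:
  fixes X :: "real^'m^'n" and Y :: "real^'p^'m"
  shows "norm (X ** Y) \<le> real CARD('n) * real CARD('p) * real CARD('m) * norm X * norm Y"
proof -
  have c: "\<bar>(X ** Y)$i$k\<bar> \<le> real CARD('m) * (norm X * norm Y)" for i k
  proof -
    have "\<bar>(X ** Y)$i$k\<bar> = \<bar>\<Sum>j\<in>UNIV. X$i$j * Y$j$k\<bar>" by (simp add: matrix_matrix_mult_def)
    also have "\<dots> \<le> (\<Sum>j\<in>UNIV. \<bar>X$i$j\<bar> * \<bar>Y$j$k\<bar>)" by (rule order_trans[OF sum_abs]) (simp add: abs_mult)
    also have "\<dots> \<le> (\<Sum>j\<in>(UNIV::'m set). norm X * norm Y)"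
      by (intro sum_mono mult_mono entry_le_norm) auto
    finally show ?thesis by simp
  qed
  have r: "norm ((X ** Y)$i) \<le> real CARD('p) * (real CARD('m) * (norm X * norm Y))" for i
  proof -
    have "norm ((X ** Y)$i) \<le> (\<Sum>k\<in>UNIV. \<bar>(X ** Y)$i$k\<bar>)" by (rule norm_le_l1_cart)
    also have "\<dots> \<le> (\<Sum>k\<in>(UNIV::'p set). real CARD('m) * (norm X * norm Y))"
      by (intro sum_mono c)
    finally show ?thesis by simp
  qed
  have "norm (X ** Y) \<le> (\<Sum>i\<in>UNIV. norm ((X ** Y)$i))" by (rule norm_le_l1_gen)
  also have "\<dots> \<le> (\<Sum>i\<in>(UNIV::'n set). real CARD('p) * (real CARD('m) * (norm X * norm Y)))"
    by (intro sum_mono r)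
  finally show ?thesis by (simp add: mult_ac)
qed

lemma wnorm2_eq: "wnorm2 (transpose A ** A) (w::real^'n) = (A *v w) \<bullet> (A *v w)"
proof -
  have "(transpose A ** A) *v w = (A *v w) v* A"
    by (simp flip: matrix_vector_mul_assoc)
  then show ?thesis unfolding wnorm2_def
    by (metis inner_commute dot_lmul_matrix)
qed

lemma aug_vec:
  fixes A R X :: "real^'n^'n"
  shows "A *v (aug_inv \<beta> R X *v v - matrix_inv A *v v) =
     (A ** matrix_inv X - A ** matrix_inv A) *v v - \<beta> *\<^sub>R ((A ** matrix_inv X ** matrix_inv R) *v v)"
  unfolding aug_inv_def
  by (simp add: algebra_simps matrix_vector_mul_assoc scaleR_matrix_vector_assoc[symmetric] matrix_mul_assoc)

lemma quad_expand:
  fixes U V :: "'a::real_inner"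
  shows "(U - \<beta> *\<^sub>R V) \<bullet> (U - \<beta> *\<^sub>R V) = U \<bullet> U - 2 * \<beta> * (U \<bullet> V) + \<beta>\<^sup>2 * (V \<bullet> V)"
  by (simp add: inner_diff_left inner_diff_right inner_commute[of V U] power2_eq_square algebra_simps)

lemma bilin_expand:
  fixes C D :: "real^'n^'m" and b :: "real^'n"
  shows "(C *v b) \<bullet> (D *v b) = (\<Sum>i\<in>UNIV. \<Sum>j\<in>UNIV. (\<Sum>k\<in>UNIV. C$k$i * D$k$j) * (b$i * b$j))"
proof -
  have "(C *v b) \<bullet> (D *v b) = (\<Sum>k\<in>UNIV. (\<Sum>i\<in>UNIV. C$k$i * b$i) * (\<Sum>j\<in>UNIV. D$k$j * b$j))"
    by (simp add: inner_vec_def matrix_vector_mult_def)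
  also have "\<dots> = (\<Sum>k\<in>UNIV. \<Sum>i\<in>UNIV. \<Sum>j\<in>UNIV. C$k$i * D$k$j * (b$i * b$j))"
    by (simp add: sum_product mult_ac)
  also have "\<dots> = (\<Sum>i\<in>UNIV. \<Sum>k\<in>UNIV. \<Sum>j\<in>UNIV. C$k$i * D$k$j * (b$i * b$j))"
    by (rule sum.swap)
  also have "\<dots> = (\<Sum>i\<in>UNIV. \<Sum>j\<in>UNIV. \<Sum>k\<in>UNIV. C$k$i * D$k$j * (b$i * b$j))"
    by (intro sum.cong refl sum.swap)
  also have "\<dots> = (\<Sum>i\<in>UNIV. \<Sum>j\<in>UNIV. (\<Sum>k\<in>UNIV. C$k$i * D$k$j) * (b$i * b$j))"
    by (simp add: sum_distrib_right)
  finally show ?thesis .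
qed

lemma trace_swap:
  fixes C D :: "real^'n^'m" and R :: "real^'n^'n"
  shows "(\<Sum>i\<in>UNIV. \<Sum>j\<in>UNIV. (\<Sum>k\<in>UNIV. C$k$i * D$k$j) * R$i$j)
       = (\<Sum>k\<in>UNIV. \<Sum>i\<in>UNIV. C$k$i * (D ** transpose R)$k$i)"
proof -
  have "(\<Sum>i\<in>UNIV. \<Sum>j\<in>UNIV. (\<Sum>k\<in>UNIV. C$k$i * D$k$j) * R$i$j)
      = (\<Sum>i\<in>UNIV. \<Sum>j\<in>UNIV. \<Sum>k\<in>UNIV. C$k$i * D$k$j * R$i$j)"
    by (simp add: sum_distrib_right)
  also have "\<dots> = (\<Sum>i\<in>UNIV. \<Sum>k\<in>UNIV. \<Sum>j\<in>UNIV. C$k$i * D$k$j * R$i$j)"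
    by (intro sum.cong refl sum.swap)
  also have "\<dots> = (\<Sum>k\<in>UNIV. \<Sum>i\<in>UNIV. \<Sum>j\<in>UNIV. C$k$i * D$k$j * R$i$j)"
    by (rule sum.swap)
  also have "\<dots> = (\<Sum>k\<in>UNIV. \<Sum>i\<in>UNIV. C$k$i * (D ** transpose R)$k$i)"
    by (simp add: matrix_matrix_mult_def transpose_def sum_distrib_left mult_ac)
  finally show ?thesis .
qed

lemma matrix_add_rdistrib': "((B + C) ** (A::real^'p^'m)) = (B ** A) + (C ** A)"
  by (vector matrix_matrix_mult_def sum.distrib[symmetric] field_simps)

definition h0 :: "real^'n^'n \<Rightarrow> real^'n^'n \<Rightarrow> real" where
  "h0 A X = (\<Sum>k\<in>UNIV. \<Sum>i\<in>UNIV. (A ** matrix_inv X - A ** matrix_inv A)$k$i * (A ** matrix_inv X)$k$i)"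

lemma h0_alt:
  assumes "invertible A"
  shows "h0 A X = (\<Sum>k\<in>UNIV. \<Sum>i\<in>UNIV. ((A ** matrix_inv X)$k$i)\<^sup>2) - (\<Sum>k\<in>UNIV. (A ** matrix_inv X)$k$k)"
proof -
  let ?M = "A ** matrix_inv X"
  have "h0 A X = (\<Sum>k\<in>UNIV. \<Sum>i\<in>UNIV. (?M$k$i - (if k = i then 1 else 0)) * ?M$k$i)"
    unfolding h0_def minv_lr(1)[OF assms] by (simp add: mat_def)
  also have "\<dots> = (\<Sum>k\<in>UNIV. \<Sum>i\<in>UNIV. (?M$k$i)\<^sup>2 - (if k = i then ?M$k$i else 0))"
    by (intro sum.cong refl) (simp add: power2_eq_square algebra_simps)
  also have "\<dots> = (\<Sum>k\<in>UNIV. (\<Sum>i\<in>UNIV. (?M$k$i)\<^sup>2) - ?M$k$k)"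
    by (simp add: sum_subtractf)
  finally show ?thesis by (simp add: sum_subtractf)
qed

lemma key_ineq:
  fixes A X Y :: "real^'n^'n"
  assumes A: "invertible A" and X: "invertible X" and Y: "invertible Y" and XY: "X + Y = 2 *\<^sub>R A"
  shows "0 \<le> h0 A X + h0 A Y"
proof -
  define M where "M = A ** matrix_inv X"
  define N where "N = A ** matrix_inv Y"
  define Ai where "Ai = matrix_inv A"
  have AAi: "A ** Ai = mat 1" "Ai ** A = mat 1" using minv_lr[OF A] by (auto simp: Ai_def)
  have 1: "M ** (X ** Ai) ** N = N"
    unfolding M_def by (metis AAi(1) X minv_lr(2) matrix_mul_assoc matrix_mul_lid matrix_mul_rid)
  have 2: "M ** (Y ** Ai) ** N = M"
    unfolding N_def
    by (metis AAi(2) Y minv_lr(1) matrix_mul_assoc matrix_mul_lid matrix_mul_rid)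
  have "M + N = M ** ((X + Y) ** Ai) ** N"
    using 1 2 by (simp add: matrix_add_rdistrib' matrix_add_ldistrib)
  also have "\<dots> = 2 *\<^sub>R (M ** N)"
    unfolding XY
    by (metis AAi(1) matrix_mul_rid matrix_scalar_ac scalar_matrix_assoc)
  finally have MN: "M + N = 2 *\<^sub>R (M ** N)" .
  have diag: "M$k$k + N$k$k = 2 * (\<Sum>i\<in>UNIV. M$k$i * N$i$k)" for k
  proof -
    have "(M + N)$k$k = (2 *\<^sub>R (M ** N))$k$k" using MN by simp
    then show ?thesis by (simp add: matrix_matrix_mult_def)
  qed
  have swapN: "(\<Sum>k\<in>UNIV. \<Sum>i\<in>UNIV. (N$k$i)\<^sup>2) = (\<Sum>k\<in>UNIV. \<Sum>i\<in>UNIV. (N$i$k)\<^sup>2)"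
    by (rule sum.swap)
  have "h0 A X + h0 A Y = (\<Sum>k\<in>UNIV. \<Sum>i\<in>UNIV. (M$k$i)\<^sup>2) + (\<Sum>k\<in>UNIV. \<Sum>i\<in>UNIV. (N$k$i)\<^sup>2)
      - (\<Sum>k\<in>UNIV. M$k$k + N$k$k)"
    unfolding h0_alt[OF A] M_def N_def by (simp add: sum.distrib)
  also have "\<dots> = (\<Sum>k\<in>UNIV. \<Sum>i\<in>UNIV. (M$k$i)\<^sup>2 + (N$i$k)\<^sup>2 - 2 * (M$k$i * N$i$k))"
    unfolding swapN diag by (simp add: sum.distrib sum_subtractf sum_distrib_left)
  also have "\<dots> = (\<Sum>k\<in>UNIV. \<Sum>i\<in>UNIV. (M$k$i - N$i$k)\<^sup>2)"
    by (simp add: power2_eq_square algebra_simps)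
  also have "\<dots> \<ge> 0" by (intro sum_nonneg) auto
  finally show ?thesis by simp
qed

lemma meas_cont2:
  fixes f :: "'a \<Rightarrow> 'b::second_countable_topology" and g :: "'a \<Rightarrow> 'c::second_countable_topology"
  assumes "continuous_on UNIV \<psi>" "f \<in> borel_measurable M" "g \<in> borel_measurable M"
  shows "(\<lambda>x. \<psi> (f x, g x)) \<in> borel_measurable M"
  using borel_measurable_continuous_on[OF assms(1) borel_measurable_Pair[OF assms(2,3)]] .

lemma not_invertible_0: "\<not> invertible (0::real^'n^'n)"
proof
  assume "invertible (0::real^'n^'n)"
  then obtain B :: "real^'n^'n" where "0 ** B = mat 1" unfolding invertible_def by blast
  then have "(mat 1 :: real^'n^'n) $ undefined $ undefined = 0" by (metis times0_left zero_index)
  then show False by (simp add: mat_def)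
qed

lemma det_cont_set: "{x::real^'n^'n. invertible (A + x)} \<in> sets borel"
proof -
  have "{x::real^'n^'n. invertible (A + x)} = {x. det (A + x) \<noteq> 0}"
    by (simp add: invertible_det_nz)
  also have "open \<dots>"
    by (intro open_Collect_neq continuous_intros continuous_on_id)
  finally show ?thesis by simp
qed

lemma indep_from_distr:
  fixes M :: "'a measure" and X :: "'a \<Rightarrow> 'b::{second_countable_topology,real_normed_vector}"
    and Y :: "'a \<Rightarrow> 'c::{second_countable_topology,real_normed_vector}"
    and g :: "'b \<Rightarrow> real" and h :: "'c \<Rightarrow> real"
  assumes P: "prob_space M" and [measurable]: "X \<in> borel_measurable M" "Y \<in> borel_measurable M"
    and ind: "distr M (borel \<Otimes>\<^sub>M borel) (\<lambda>\<omega>. (X \<omega>, Y \<omega>)) = distr M borel X \<Otimes>\<^sub>M distr M borel Y"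
    and [measurable]: "g \<in> borel_measurable borel" "h \<in> borel_measurable borel"
  shows "prob_space.indep_var M borel (\<lambda>\<omega>. g (X \<omega>)) borel (\<lambda>\<omega>. h (Y \<omega>))"
proof -
  interpret prob_space M by fact
  define X1 where "X1 = (\<lambda>\<omega>. (X \<omega>, 0::'c))"
  define Y1 where "Y1 = (\<lambda>\<omega>. (0::'b, Y \<omega>))"
  have [measurable]: "X1 \<in> borel_measurable M" "Y1 \<in> borel_measurable M" unfolding X1_def Y1_def by measurable
  have s: "sigma_finite_measure (distr (distr M borel Y) borel (\<lambda>y. (0::'b, y)))"
  proof -
    have "prob_space (distr M borel Y)" by (rule prob_space_distr) measurable
    then have "prob_space (distr (distr M borel Y) borel (\<lambda>y. (0::'b, y)))"
      by (rule prob_space.prob_space_distr) measurable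
    then show ?thesis by (rule prob_space_imp_sigma_finite)
  qed
  have "distr M borel X1 \<Otimes>\<^sub>M distr M borel Y1 =
      distr (distr M borel X) borel (\<lambda>x. (x, 0::'c)) \<Otimes>\<^sub>M distr (distr M borel Y) borel (\<lambda>y. (0::'b, y))"
  proof -
    have "distr (distr M borel X) borel (\<lambda>x. (x, 0::'c)) = distr M borel ((\<lambda>x. (x, 0::'c)) \<circ> X)"
      by (rule distr_distr) measurable
    moreover have "distr (distr M borel Y) borel (\<lambda>y. (0::'b, y)) = distr M borel ((\<lambda>y. (0::'b, y)) \<circ> Y)"
      by (rule distr_distr) measurable
    ultimately show ?thesis by (simp add: X1_def Y1_def comp_def)
  qed
  also have "\<dots> = distr (distr M borel X \<Otimes>\<^sub>M distr M borel Y) (borel \<Otimes>\<^sub>M borel) (\<lambda>(x, y). ((x, 0::'c), (0::'b, y)))"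
    by (rule pair_measure_distr[OF _ _ s]) measurable
  also have "\<dots> = distr M (borel \<Otimes>\<^sub>M borel) (\<lambda>\<omega>. (X1 \<omega>, Y1 \<omega>))"
  proof -
    have "distr (distr M (borel \<Otimes>\<^sub>M borel) (\<lambda>\<omega>. (X \<omega>, Y \<omega>))) (borel \<Otimes>\<^sub>M borel) (\<lambda>(x, y). ((x, 0::'c), (0::'b, y)))
       = distr M (borel \<Otimes>\<^sub>M borel) ((\<lambda>(x, y). ((x, 0::'c), (0::'b, y))) \<circ> (\<lambda>\<omega>. (X \<omega>, Y \<omega>)))"
      by (rule distr_distr) measurable
    then show ?thesis unfolding ind[symmetric] by (simp add: X1_def Y1_def comp_def)
  qed
  finally have "indep_var borel X1 borel Y1"
    by (intro indep_var_distribution_eq[THEN iffD2]) auto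
  moreover have "fst \<in> borel_measurable (borel :: ('b \<times> 'c) measure)"
    by (intro borel_measurable_continuous_onI continuous_on_fst continuous_on_id)
  moreover have "snd \<in> borel_measurable (borel :: ('b \<times> 'c) measure)"
    by (intro borel_measurable_continuous_onI continuous_on_snd continuous_on_id)
  ultimately have "indep_var borel ((\<lambda>p. g (fst p)) \<circ> X1) borel ((\<lambda>p. h (snd p)) \<circ> Y1)"
    by (intro indep_var_compose) (auto intro: measurable_compose)
  then show ?thesis by (simp add: comp_def X1_def Y1_def)
qed

lemma sq_bound: "(1 + x)\<^sup>2 \<le> 2 + 2 * (x::real)\<^sup>2"
proof -
  have "(1 + x)\<^sup>2 = 2 + 2*x\<^sup>2 - (1 - x)\<^sup>2" by (simp add: power2_eq_square algebra_simps)
  then show ?thesis using zero_le_power2[of "1-x"] by linarith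
qed

lemma test_integrability:
  fixes M :: "'a measure" and Ahat :: "'a \<Rightarrow> real^'n^'n" and b :: "'a \<Rightarrow> real^'n"
  assumes "prob_space M"
    and [measurable]: "Ahat \<in> borel_measurable M"
    and int5: "integrable M (\<lambda>\<omega>. (norm (matrix_inv (Ahat \<omega>)))\<^sup>2)"
    and [measurable]: "b \<in> borel_measurable M"
    and ind: "distr M (borel \<Otimes>\<^sub>M borel) (\<lambda>\<omega>. (Ahat \<omega>, b \<omega>))
           = distr M borel Ahat \<Otimes>\<^sub>M distr M borel b"
    and into: "integrable M (\<lambda>\<omega>. outer (b \<omega>))"
  shows "integrable M (\<lambda>\<omega>. (1 + norm (matrix_inv (Ahat \<omega>)))\<^sup>2 * (norm (b \<omega>))\<^sup>2)"
    and "integrable M (\<lambda>\<omega>. (1 + norm (matrix_inv (Ahat \<omega>)))\<^sup>2)"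
    and "\<And>i j. integrable M (\<lambda>\<omega>. b \<omega> $ i * b \<omega> $ j)"
proof -
  interpret prob_space M by fact
  have Pm[measurable]: "(\<lambda>\<omega>. matrix_inv (Ahat \<omega>)) \<in> borel_measurable M" by measurable
  show bij: "integrable M (\<lambda>\<omega>. b \<omega> $ i * b \<omega> $ j)" for i j
  proof -
    have "bounded_linear (\<lambda>X::real^'n^'n. X $ i $ j)"
      using bounded_linear_compose[OF bounded_linear_vec_nth bounded_linear_vec_nth] .
    from integrable_bounded_linear[OF this into] show ?thesis by (simp add: outer_def)
  qed
  have nb: "integrable M (\<lambda>\<omega>. (norm (b \<omega>))\<^sup>2)"
  proof -
    have "(\<lambda>\<omega>. (norm (b \<omega>))\<^sup>2) = (\<lambda>\<omega>. \<Sum>i\<in>UNIV. b \<omega> $ i * b \<omega> $ i)"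
      by (simp add: power2_norm_eq_inner inner_vec_def)
    then show ?thesis using bij by simp
  qed
  have "prob_space.indep_var M borel (\<lambda>\<omega>. (norm (matrix_inv (Ahat \<omega>)))\<^sup>2) borel (\<lambda>\<omega>. (norm (b \<omega>))\<^sup>2)"
    by (rule indep_from_distr[OF assms(1) _ _ ind]) measurable
  then have "integrable M (\<lambda>\<omega>. (norm (matrix_inv (Ahat \<omega>)))\<^sup>2 * (norm (b \<omega>))\<^sup>2)"
    using prob_space.indep_var_integrable[OF assms(1) _ int5 nb] by (simp add: comp_def)
  then have i2: "integrable M (\<lambda>\<omega>. 2 * (norm (b \<omega>))\<^sup>2 + 2 * ((norm (matrix_inv (Ahat \<omega>)))\<^sup>2 * (norm (b \<omega>))\<^sup>2))"
    using nb by auto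
  show "integrable M (\<lambda>\<omega>. (1 + norm (matrix_inv (Ahat \<omega>)))\<^sup>2 * (norm (b \<omega>))\<^sup>2)"
  proof (rule Bochner_Integration.integrable_bound[OF i2])
    show "(\<lambda>\<omega>. (1 + norm (matrix_inv (Ahat \<omega>)))\<^sup>2 * (norm (b \<omega>))\<^sup>2) \<in> borel_measurable M" by measurable
    have "(1 + x)\<^sup>2 * y \<le> 2 * y + 2 * (x\<^sup>2 * y)" if "y \<ge> 0" for x y :: real
      using mult_right_mono[OF sq_bound[of x] that] by (simp add: distrib_right mult.assoc)
    then show "AE x in M. norm ((1 + norm (matrix_inv (Ahat x)))\<^sup>2 * (norm (b x))\<^sup>2)
        \<le> norm (2 * (norm (b x))\<^sup>2 + 2 * ((norm (matrix_inv (Ahat x)))\<^sup>2 * (norm (b x))\<^sup>2))"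
      by (intro AE_I2) auto
  qed
  have i3: "integrable M (\<lambda>\<omega>. 2 + 2 * (norm (matrix_inv (Ahat \<omega>)))\<^sup>2)"
    using int5 by auto
  show "integrable M (\<lambda>\<omega>. (1 + norm (matrix_inv (Ahat \<omega>)))\<^sup>2)"
  proof (rule Bochner_Integration.integrable_bound[OF i3])
    show "(\<lambda>\<omega>. (1 + norm (matrix_inv (Ahat \<omega>)))\<^sup>2) \<in> borel_measurable M" by measurable
    note sq_bound
    then show "AE x in M. norm ((1 + norm (matrix_inv (Ahat x)))\<^sup>2) \<le> norm (2 + 2 * (norm (matrix_inv (Ahat x)))\<^sup>2)"
      by (intro AE_I2) auto
  qed
qed

lemma card_ge1: "1 \<le> real CARD('n::finite)"
  by (simp add: Suc_leI)

lemma nAP_bound: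
  fixes A P :: "real^'n^'n"
  shows "norm (A ** P) \<le> real CARD('n)^3 * norm A * (1 + norm P)"
proof -
  have "norm (A ** P) \<le> real CARD('n)^3 * norm A * norm P"
    using norm_mm_le[of A P] by (simp add: power3_eq_cube mult_ac)
  also have "\<dots> \<le> real CARD('n)^3 * norm A * (1 + norm P)"
    by (intro mult_left_mono) auto
  finally show ?thesis .
qed

lemma nCC_bound:
  fixes A P Ai :: "real^'n^'n"
  shows "norm (A ** P - A ** Ai) \<le> real CARD('n)^3 * norm A * (1 + norm Ai) * (1 + norm P)"
proof -
  let ?a = "real CARD('n)^3 * norm A"
  have a0: "0 \<le> ?a" by simp
  have "norm (A ** P - A ** Ai) \<le> norm (A ** P) + norm (A ** Ai)" by (rule norm_triangle_ineq4)
  also have "\<dots> \<le> ?a * norm P + ?a * norm Ai"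
    using norm_mm_le[of A P] norm_mm_le[of A Ai] by (simp add: power3_eq_cube mult_ac)
  also have "\<dots> \<le> ?a * (1 + norm Ai) * (1 + norm P)"
  proof -
    have "0 \<le> ?a * (1 + norm Ai * norm P)" using a0 by simp
    then show ?thesis by (simp add: algebra_simps)
  qed
  finally show ?thesis .
qed

lemma nDD_bound:
  fixes A P Ri :: "real^'n^'n"
  shows "norm (A ** P ** Ri) \<le> real CARD('n)^6 * norm A * norm Ri * (1 + norm P)"
proof -
  have "norm (A ** P ** Ri) \<le> real CARD('n)^3 * norm (A ** P) * norm Ri"
    using norm_mm_le[of "A ** P" Ri] by (simp add: power3_eq_cube mult_ac)
  also have "\<dots> \<le> real CARD('n)^3 * (real CARD('n)^3 * norm A * (1 + norm P)) * norm Ri"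
    by (intro mult_right_mono mult_left_mono nAP_bound) auto
  finally show ?thesis by (simp add: algebra_simps power_add[symmetric])
qed

lemma bil_bound:
  fixes X Y :: "real^'n^'n" and v :: "real^'n"
  shows "\<bar>(X *v v) \<bullet> (Y *v v)\<bar> \<le> real CARD('n)^4 * (norm X * norm Y) * (norm v)\<^sup>2"
proof -
  have "\<bar>(X *v v) \<bullet> (Y *v v)\<bar> \<le> norm (X *v v) * norm (Y *v v)" by (rule Cauchy_Schwarz_ineq2)
  also have "\<dots> \<le> (real CARD('n) * real CARD('n) * norm X * norm v) * (real CARD('n) * real CARD('n) * norm Y * norm v)"
    by (intro mult_mono norm_mv_le) auto
  finally show ?thesis by (simp add: power2_eq_square power4_eq_xxxx mult_ac)
qed

lemma G_bound:
  fixes X Y :: "real^'n^'n"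
  shows "\<bar>\<Sum>k\<in>UNIV. X$k$i * Y$k$j\<bar> \<le> real CARD('n) * (norm X * norm Y)"
proof -
  have "\<bar>\<Sum>k\<in>UNIV. X$k$i * Y$k$j\<bar> \<le> (\<Sum>k\<in>UNIV. \<bar>X$k$i\<bar> * \<bar>Y$k$j\<bar>)"
    by (rule order_trans[OF sum_abs]) (simp add: abs_mult)
  also have "\<dots> \<le> (\<Sum>k\<in>(UNIV::'n set). norm X * norm Y)"
    by (intro sum_mono mult_mono entry_le_norm) auto
  finally show ?thesis by simp
qed

lemma H_bound:
  fixes X Y :: "real^'n^'n"
  shows "\<bar>\<Sum>k\<in>UNIV. \<Sum>i\<in>UNIV. X$k$i * Y$k$i\<bar> \<le> real CARD('n)^2 * (norm X * norm Y)"
proof -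
  have "\<bar>\<Sum>k\<in>UNIV. \<Sum>i\<in>UNIV. X$k$i * Y$k$i\<bar> \<le> (\<Sum>k\<in>UNIV. \<bar>\<Sum>i\<in>UNIV. X$k$i * Y$k$i\<bar>)"
    by (rule sum_abs)
  also have "\<dots> \<le> (\<Sum>k\<in>(UNIV::'n set). real CARD('n) * (norm X * norm Y))"
  proof (intro sum_mono)
    fix k
    have "\<bar>\<Sum>i\<in>UNIV. X$k$i * Y$k$i\<bar> \<le> (\<Sum>i\<in>UNIV. \<bar>X$k$i\<bar> * \<bar>Y$k$i\<bar>)"
      by (rule order_trans[OF sum_abs]) (simp add: abs_mult)
    also have "\<dots> \<le> (\<Sum>i\<in>(UNIV::'n set). norm X * norm Y)"
      by (intro sum_mono mult_mono entry_le_norm) auto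
    finally show "\<bar>\<Sum>i\<in>UNIV. X$k$i * Y$k$i\<bar> \<le> real CARD('n) * (norm X * norm Y)" by simp
  qed
  finally show ?thesis by (simp add: power2_eq_square)
qed

lemma h0_measurable[measurable]: "(\<lambda>X. h0 A X) \<in> borel_measurable borel"
proof -
  have "(\<lambda>P. \<Sum>k\<in>UNIV. \<Sum>i\<in>UNIV. (A ** P - A ** matrix_inv A)$k$i * (A ** P)$k$i) \<in> borel_measurable borel"
    by (intro borel_measurable_continuous_onI continuous_intros continuous_on_id)
  from measurable_compose[OF matrix_inv_measurable this] show ?thesis
    unfolding h0_def .
qed

lemma symm_nonneg:
  fixes M :: "'a measure" and Ahat :: "'a \<Rightarrow> real^'n^'n"
  assumes P: "prob_space M" and [measurable]: "Ahat \<in> borel_measurable M"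
    and inv: "AE \<omega> in M. invertible (Ahat \<omega>)" and A: "invertible A"
    and sym: "distr M borel (\<lambda>\<omega>. Ahat \<omega> - A) = distr M borel (\<lambda>\<omega>. A - Ahat \<omega>)"
    and int: "integrable M (\<lambda>\<omega>. h0 A (Ahat \<omega>))"
  shows "0 \<le> (\<integral>\<omega>. h0 A (Ahat \<omega>) \<partial>M)"
proof -
  interpret prob_space M by fact
  define k where "k = (\<lambda>x. h0 A (A + x))"
  have km[measurable]: "k \<in> borel_measurable borel"
    unfolding k_def by measurable
  have m1[measurable]: "(\<lambda>\<omega>. Ahat \<omega> - A) \<in> borel_measurable M" by measurable
  have m2[measurable]: "(\<lambda>\<omega>. A - Ahat \<omega>) \<in> borel_measurable M" by measurable
  have e0: "(\<lambda>\<omega>. h0 A (Ahat \<omega>)) = (\<lambda>\<omega>. k (Ahat \<omega> - A))" by (simp add: k_def)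
  have "(\<integral>\<omega>. h0 A (Ahat \<omega>) \<partial>M) = integral\<^sup>L (distr M borel (\<lambda>\<omega>. Ahat \<omega> - A)) k"
    unfolding e0 by (rule integral_distr[symmetric]) measurable
  also have "\<dots> = integral\<^sup>L (distr M borel (\<lambda>\<omega>. A - Ahat \<omega>)) k" unfolding sym ..
  also have "\<dots> = (\<integral>\<omega>. k (A - Ahat \<omega>) \<partial>M)"
    by (rule integral_distr) measurable
  finally have e1: "(\<integral>\<omega>. h0 A (Ahat \<omega>) \<partial>M) = (\<integral>\<omega>. k (A - Ahat \<omega>) \<partial>M)" .
  have "integrable (distr M borel (\<lambda>\<omega>. Ahat \<omega> - A)) k"
    using int unfolding e0 by (subst integrable_distr_eq) auto
  then have "integrable (distr M borel (\<lambda>\<omega>. A - Ahat \<omega>)) k" unfolding sym .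
  then have int2: "integrable M (\<lambda>\<omega>. k (A - Ahat \<omega>))"
    by (subst (asm) integrable_distr_eq) auto
  have setm: "{x \<in> space borel. invertible (A + x)} \<in> sets (borel :: (real^'n^'n) measure)"
    using det_cont_set[of A] by simp
  have "AE \<omega> in M. invertible (A + (Ahat \<omega> - A))" using inv by simp
  then have "AE x in distr M borel (\<lambda>\<omega>. Ahat \<omega> - A). invertible (A + x)"
    by (subst AE_distr_iff[OF m1 setm])
  then have "AE x in distr M borel (\<lambda>\<omega>. A - Ahat \<omega>). invertible (A + x)" unfolding sym .
  then have inv2: "AE \<omega> in M. invertible (A + (A - Ahat \<omega>))"
    by (subst (asm) AE_distr_iff[OF m2 setm])
  have "0 \<le> (\<integral>\<omega>. h0 A (Ahat \<omega>) + k (A - Ahat \<omega>) \<partial>M)"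
  proof (rule integral_nonneg_AE)
    show "AE \<omega> in M. 0 \<le> h0 A (Ahat \<omega>) + k (A - Ahat \<omega>)"
      using inv inv2
    proof eventually_elim
      case (elim \<omega>)
      have "Ahat \<omega> + (A + (A - Ahat \<omega>)) = 2 *\<^sub>R A" by (simp add: scaleR_2)
      from key_ineq[OF A elim(1) elim(2) this] show ?case by (simp add: k_def)
    qed
  qed
  also have "\<dots> = (\<integral>\<omega>. h0 A (Ahat \<omega>) \<partial>M) + (\<integral>\<omega>. k (A - Ahat \<omega>) \<partial>M)"
    by (rule Bochner_Integration.integral_add[OF int int2])
  finally show ?thesis unfolding e1[symmetric] by simp
qed

theorem theorem7p1:
  fixes M :: "'a measure"
    and A :: "real^'n^'n"
    and Ahat :: "'a \<Rightarrow> real^'n^'n"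
    and b :: "'a \<Rightarrow> real^'n"
    and R :: "real^'n^'n"
  assumes "prob_space M"
    and "invertible A"
    and "Ahat \<in> borel_measurable M"
    and "AE \<omega> in M. invertible (Ahat \<omega>)"
    and "integrable M (\<lambda>\<omega>. (norm (matrix_inv (Ahat \<omega>)))\<^sup>2)"
    and "distr M borel (\<lambda>\<omega>. Ahat \<omega> - A) = distr M borel (\<lambda>\<omega>. A - Ahat \<omega>)"
    and "integrable M Ahat"
    and "(\<integral>\<omega>. Ahat \<omega> \<partial>M) = A"
    and "b \<in> borel_measurable M"
    and "distr M (borel \<Otimes>\<^sub>M borel) (\<lambda>\<omega>. (Ahat \<omega>, b \<omega>))
           = distr M borel Ahat \<Otimes>\<^sub>M distr M borel b"
    and "integrable M (\<lambda>\<omega>. outer (b \<omega>))"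
    and "R = (\<integral>\<omega>. outer (b \<omega>) \<partial>M)"
    and "invertible R"
  shows "\<exists>\<beta>s. (\<forall>\<beta>. resid_err M A Ahat b R \<beta>s \<le> resid_err M A Ahat b R \<beta>)
            \<and> (\<forall>\<beta>s'. (\<forall>\<beta>. resid_err M A Ahat b R \<beta>s' \<le> resid_err M A Ahat b R \<beta>) \<longrightarrow> 0 \<le> \<beta>s')"
proof -
  interpret prob_space M by (rule assms(1))
  note [measurable] = assms(3) assms(9)
  have Pm[measurable]: "(\<lambda>\<omega>. matrix_inv (Ahat \<omega>)) \<in> borel_measurable M" by measurable
  define Ai where "Ai = matrix_inv A"
  define Ri where "Ri = matrix_inv R"
  define c where "c = real CARD('n)^6 * norm A * (1 + norm Ai) * (1 + norm Ri)"
  define K where "K = real CARD('n)^4 * c^2"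
  define CC where "CC = (\<lambda>X::real^'n^'n. A ** matrix_inv X - A ** Ai)"
  define DD where "DD = (\<lambda>X::real^'n^'n. A ** matrix_inv X ** Ri)"
  define U where "U = (\<lambda>\<omega>. CC (Ahat \<omega>) *v b \<omega>)"
  define V where "V = (\<lambda>\<omega>. DD (Ahat \<omega>) *v b \<omega>)"
  define t where "t = (\<lambda>\<omega>. norm (matrix_inv (Ahat \<omega>)))"
  define G where "G = (\<lambda>i j X. \<Sum>k\<in>UNIV. CC X $k$i * DD X $k$j)"
  have nn1: "1 \<le> real CARD('n)" by (rule card_ge1)
  have c0: "0 \<le> c" unfolding c_def by simp
  have K0: "0 \<le> K" unfolding K_def by simp
  have n36: "real CARD('n)^3 \<le> real CARD('n)^6"
    using nn1 by (intro power_increasing) auto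
  have cc1: "real CARD('n)^3 * norm A * (1 + norm Ai) \<le> c"
  proof -
    have a: "real CARD('n)^3 * norm A * (1 + norm Ai) \<le> real CARD('n)^6 * norm A * (1 + norm Ai)"
      by (intro mult_right_mono n36) auto
    have "0 \<le> (real CARD('n)^6 * norm A * (1 + norm Ai)) * norm Ri" by simp
    then have "real CARD('n)^6 * norm A * (1 + norm Ai) \<le> c" unfolding c_def by (simp add: algebra_simps)
    with a show ?thesis by linarith
  qed
  have cc2: "real CARD('n)^6 * norm A * norm Ri \<le> c"
  proof -
    have "norm Ri \<le> (1 + norm Ai) * (1 + norm Ri)"
    proof -
      have "0 \<le> norm Ai * (1 + norm Ri)" by simp
      then show ?thesis by (simp add: algebra_simps)
    qed
    then have "real CARD('n)^6 * norm A * norm Ri \<le> real CARD('n)^6 * norm A * ((1 + norm Ai) * (1 + norm Ri))"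
      by (intro mult_left_mono) auto
    then show ?thesis unfolding c_def by (simp add: mult_ac)
  qed
  have cc3: "real CARD('n)^3 * norm A \<le> c"
  proof -
    have "real CARD('n)^3 * norm A \<le> real CARD('n)^3 * norm A * (1 + norm Ai)"
    proof -
      have "0 \<le> real CARD('n)^3 * norm A * norm Ai" by simp
      then show ?thesis by (simp add: algebra_simps)
    qed
    with cc1 show ?thesis by linarith
  qed
  have cCC: "norm (CC X) \<le> c * (1 + norm (matrix_inv X))" for X
  proof -
    have "norm (CC X) \<le> real CARD('n)^3 * norm A * (1 + norm Ai) * (1 + norm (matrix_inv X))"
      unfolding CC_def by (rule nCC_bound)
    also have "\<dots> \<le> c * (1 + norm (matrix_inv X))"
      by (intro mult_right_mono cc1) auto
    finally show ?thesis .
  qed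
  have cDD: "norm (DD X) \<le> c * (1 + norm (matrix_inv X))" for X
  proof -
    have "norm (DD X) \<le> real CARD('n)^6 * norm A * norm Ri * (1 + norm (matrix_inv X))"
      unfolding DD_def by (rule nDD_bound)
    also have "\<dots> \<le> c * (1 + norm (matrix_inv X))"
      by (intro mult_right_mono cc2) auto
    finally show ?thesis .
  qed
  have cAP: "norm (A ** matrix_inv X) \<le> c * (1 + norm (matrix_inv X))" for X :: "real^'n^'n"
  proof -
    have "norm (A ** matrix_inv X) \<le> real CARD('n)^3 * norm A * (1 + norm (matrix_inv X))"
      by (rule nAP_bound)
    also have "\<dots> \<le> c * (1 + norm (matrix_inv X))"
      by (intro mult_right_mono cc3) auto
    finally show ?thesis .
  qed
  have prodb: "norm X' * norm Y' \<le> c\<^sup>2 * (1 + s)\<^sup>2"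
    if "norm X' \<le> c * (1 + s)" "norm Y' \<le> c * (1 + s)" "0 \<le> s" for X' Y' :: "real^'n^'n" and s
  proof -
    have "norm X' * norm Y' \<le> (c * (1 + s)) * (c * (1 + s))"
      using c0 that by (intro mult_mono) auto
    then show ?thesis by (simp add: power2_eq_square mult_ac)
  qed
  have bilK: "\<bar>(X' *v v) \<bullet> (Y' *v v)\<bar> \<le> K * ((1 + s)\<^sup>2 * (norm v)\<^sup>2)"
    if "norm X' \<le> c * (1 + s)" "norm Y' \<le> c * (1 + s)" "0 \<le> s" for X' Y' :: "real^'n^'n" and v s
  proof -
    have "\<bar>(X' *v v) \<bullet> (Y' *v v)\<bar> \<le> real CARD('n)^4 * (norm X' * norm Y') * (norm v)\<^sup>2"
      by (rule bil_bound)
    also have "\<dots> \<le> real CARD('n)^4 * (c\<^sup>2 * (1 + s)\<^sup>2) * (norm v)\<^sup>2"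
      by (intro mult_right_mono mult_left_mono prodb that) auto
    finally show ?thesis by (simp add: K_def mult_ac)
  qed
  have n14: "real CARD('n) \<le> real CARD('n)^4" and n24: "real CARD('n)^2 \<le> real CARD('n)^4"
    using nn1 power_increasing[of 1 4 "real CARD('n)"] power_increasing[of 2 4 "real CARD('n)"] by auto
  have GK: "\<bar>G i j X\<bar> \<le> K * (1 + norm (matrix_inv X))\<^sup>2" for i j X
  proof -
    have "\<bar>G i j X\<bar> \<le> real CARD('n) * (norm (CC X) * norm (DD X))"
      unfolding G_def by (rule G_bound)
    also have "\<dots> \<le> real CARD('n)^4 * (c\<^sup>2 * (1 + norm (matrix_inv X))\<^sup>2)"
      by (intro mult_mono n14 prodb cCC cDD) auto
    finally show ?thesis by (simp add: K_def mult_ac)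
  qed
  have hK: "\<bar>h0 A X\<bar> \<le> K * (1 + norm (matrix_inv X))\<^sup>2" for X
  proof -
    have "\<bar>h0 A X\<bar> \<le> real CARD('n)^2 * (norm (CC X) * norm (A ** matrix_inv X))"
      unfolding h0_def CC_def Ai_def by (rule H_bound)
    also have "\<dots> \<le> real CARD('n)^4 * (c\<^sup>2 * (1 + norm (matrix_inv X))\<^sup>2)"
      by (intro mult_mono n24 prodb cCC cAP) auto
    finally show ?thesis by (simp add: K_def mult_ac)
  qed

  have Um[measurable]: "U \<in> borel_measurable M"
  proof -
    have "(\<lambda>\<omega>. (\<lambda>p. (A ** fst p - A ** Ai) *v snd p) (matrix_inv (Ahat \<omega>), b \<omega>)) \<in> borel_measurable M"
      by (rule meas_cont2[OF _ Pm assms(9)]) (intro continuous_intros continuous_on_fst continuous_on_snd continuous_on_id)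
    then show ?thesis by (simp add: U_def CC_def)
  qed
  have Vm[measurable]: "V \<in> borel_measurable M"
  proof -
    have "(\<lambda>\<omega>. (\<lambda>p. (A ** fst p ** Ri) *v snd p) (matrix_inv (Ahat \<omega>), b \<omega>)) \<in> borel_measurable M"
      by (rule meas_cont2[OF _ Pm assms(9)]) (intro continuous_intros continuous_on_fst continuous_on_snd continuous_on_id)
    then show ?thesis by (simp add: V_def DD_def)
  qed
  have Gm[measurable]: "(\<lambda>X. G i j X) \<in> borel_measurable borel" for i j
  proof -
    have "(\<lambda>P. \<Sum>k\<in>UNIV. (A ** P - A ** Ai) $k$i * (A ** P ** Ri) $k$j) \<in> borel_measurable borel"
      by (intro borel_measurable_continuous_onI continuous_intros continuous_on_id)
    from measurable_compose[OF matrix_inv_measurable this] show ?thesis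
      by (simp add: G_def CC_def DD_def)
  qed
  note ti = test_integrability[OF assms(1) assms(3) assms(5) assms(9) assms(10) assms(11)]
  have intKF: "integrable M (\<lambda>\<omega>. K * ((1 + t \<omega>)\<^sup>2 * (norm (b \<omega>))\<^sup>2))"
    using ti(1) unfolding t_def by auto
  have intKT: "integrable M (\<lambda>\<omega>. K * (1 + t \<omega>)\<^sup>2)"
    using ti(2) unfolding t_def by auto
  have intbb: "integrable M (\<lambda>\<omega>. b \<omega> $ i * b \<omega> $ j)" for i j by (rule ti(3))
  have nh: "norm x \<le> norm y" if "\<bar>x\<bar> \<le> y" for x y :: real using that by auto
  have t0: "0 \<le> t \<omega>" for \<omega> unfolding t_def by simp
  have iUU: "integrable M (\<lambda>\<omega>. U \<omega> \<bullet> U \<omega>)"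
    by (rule Bochner_Integration.integrable_bound[OF intKF], measurable, intro AE_I2 nh)
       (unfold U_def t_def, intro bilK cCC t0[unfolded t_def])
  have iUV: "integrable M (\<lambda>\<omega>. U \<omega> \<bullet> V \<omega>)"
    by (rule Bochner_Integration.integrable_bound[OF intKF], measurable, intro AE_I2 nh)
       (unfold U_def V_def t_def, intro bilK cCC cDD t0[unfolded t_def])
  have iVV: "integrable M (\<lambda>\<omega>. V \<omega> \<bullet> V \<omega>)"
    by (rule Bochner_Integration.integrable_bound[OF intKF], measurable, intro AE_I2 nh)
       (unfold V_def t_def, intro bilK cDD t0[unfolded t_def])
  have iG: "integrable M (\<lambda>\<omega>. G i j (Ahat \<omega>))" for i j
    by (rule Bochner_Integration.integrable_bound[OF intKT], measurable, intro AE_I2 nh)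
       (unfold t_def, rule GK)
  have ih: "integrable M (\<lambda>\<omega>. h0 A (Ahat \<omega>))"
    by (rule Bochner_Integration.integrable_bound[OF intKT], measurable, intro AE_I2 nh)
       (unfold t_def, rule hK)
  define Q0 where "Q0 = (\<integral>\<omega>. U \<omega> \<bullet> U \<omega> \<partial>M)"
  define Q1 where "Q1 = (\<integral>\<omega>. U \<omega> \<bullet> V \<omega> \<partial>M)"
  define Q2 where "Q2 = (\<integral>\<omega>. V \<omega> \<bullet> V \<omega> \<partial>M)"
  have pt: "wnorm2 (transpose A ** A) (aug_inv \<beta> R (Ahat \<omega>) *v b \<omega> - matrix_inv A *v b \<omega>)
      = U \<omega> \<bullet> U \<omega> - 2 * \<beta> * (U \<omega> \<bullet> V \<omega>) + \<beta>\<^sup>2 * (V \<omega> \<bullet> V \<omega>)" for \<beta> \<omega>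
    unfolding wnorm2_eq aug_vec U_def V_def CC_def DD_def Ai_def Ri_def quad_expand ..
  have res: "resid_err M A Ahat b R \<beta> = Q0 - 2 * \<beta> * Q1 + \<beta>\<^sup>2 * Q2" for \<beta>
    unfolding resid_err_def pt Q0_def Q1_def Q2_def
    using iUU iUV iVV by simp

  have Rij: "R $ i $ j = (\<integral>\<omega>. b \<omega> $ i * b \<omega> $ j \<partial>M)" for i j
  proof -
    have bl: "bounded_linear (\<lambda>X::real^'n^'n. X $ i $ j)"
      using bounded_linear_compose[OF bounded_linear_vec_nth bounded_linear_vec_nth] .
    have "R $ i $ j = (\<integral>\<omega>. outer (b \<omega>) $ i $ j \<partial>M)"
      unfolding assms(12) by (rule integral_bounded_linear[OF bl assms(11), symmetric])
    then show ?thesis by (simp add: outer_def)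
  qed
  have Rsym: "transpose R = R"
    by (simp add: vec_eq_iff transpose_def Rij mult.commute)
  have RiR: "Ri ** R = mat 1" unfolding Ri_def by (rule minv_lr(2)[OF assms(13)])
  have indij: "indep_var borel (\<lambda>\<omega>. G i j (Ahat \<omega>)) borel (\<lambda>\<omega>. (\<lambda>v. v $ i * v $ j) (b \<omega>))" for i j
    by (rule indep_from_distr[OF assms(1) assms(3) assms(9) assms(10)]) measurable
  have intprod: "integrable M (\<lambda>\<omega>. G i j (Ahat \<omega>) * (b \<omega> $ i * b \<omega> $ j))" for i j
    using indep_var_integrable[OF indij[of i j] iG intbb] by simp
  have eprod: "(\<integral>\<omega>. G i j (Ahat \<omega>) * (b \<omega> $ i * b \<omega> $ j) \<partial>M) = (\<integral>\<omega>. G i j (Ahat \<omega>) \<partial>M) * R $ i $ j" for i j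
    using indep_var_lebesgue_integral[OF indij[of i j] iG intbb] by (simp add: Rij)
  have q1e: "U \<omega> \<bullet> V \<omega> = (\<Sum>i\<in>UNIV. \<Sum>j\<in>UNIV. G i j (Ahat \<omega>) * (b \<omega> $ i * b \<omega> $ j))" for \<omega>
    unfolding U_def V_def G_def by (rule bilin_expand)
  have hpt: "(\<Sum>i\<in>UNIV. \<Sum>j\<in>UNIV. G i j X * R $ i $ j) = h0 A X" for X
  proof -
    have "DD X ** transpose R = A ** matrix_inv X"
      unfolding Rsym DD_def by (simp flip: matrix_mul_assoc add: RiR)
    then show ?thesis
      unfolding G_def trace_swap by (simp add: h0_def CC_def Ai_def)
  qed
  have "Q1 = (\<Sum>i\<in>UNIV. \<Sum>j\<in>UNIV. \<integral>\<omega>. G i j (Ahat \<omega>) * (b \<omega> $ i * b \<omega> $ j) \<partial>M)"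
    unfolding Q1_def q1e
    using intprod by (subst Bochner_Integration.integral_sum) auto
  also have "\<dots> = (\<Sum>i\<in>UNIV. \<Sum>j\<in>UNIV. \<integral>\<omega>. G i j (Ahat \<omega>) * R $ i $ j \<partial>M)"
    by (simp add: eprod)
  also have "\<dots> = (\<integral>\<omega>. (\<Sum>i\<in>UNIV. \<Sum>j\<in>UNIV. G i j (Ahat \<omega>) * R $ i $ j) \<partial>M)"
    using iG by (subst Bochner_Integration.integral_sum) auto
  also have "\<dots> = (\<integral>\<omega>. h0 A (Ahat \<omega>) \<partial>M)" by (simp add: hpt)
  finally have Q1h: "Q1 = (\<integral>\<omega>. h0 A (Ahat \<omega>) \<partial>M)" .
  have Q1nn: "0 \<le> Q1"
    unfolding Q1h by (rule symm_nonneg[OF assms(1) assms(3) assms(4) assms(2) assms(6) ih])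

  have Q2nn: "0 \<le> Q2" unfolding Q2_def by (intro integral_nonneg_AE AE_I2) simp
  have Q2pos: "0 < Q2"
  proof (rule ccontr)
    assume "\<not> 0 < Q2"
    then have "Q2 = 0" using Q2nn by simp
    then have "AE \<omega> in M. V \<omega> \<bullet> V \<omega> = 0"
      unfolding Q2_def by (subst (asm) integral_nonneg_eq_0_iff_AE[OF iVV]) auto
    then have "AE \<omega> in M. outer (b \<omega>) = 0"
      using assms(4)
    proof eventually_elim
      case (elim \<omega>)
      have V0: "V \<omega> = 0" using elim(1) by simp
      define W where "W = R ** Ahat \<omega> ** Ai"
      have "W ** DD (Ahat \<omega>) = mat 1"
      proof -
        have "W ** DD (Ahat \<omega>) = R ** (Ahat \<omega> ** (Ai ** A) ** matrix_inv (Ahat \<omega>)) ** Ri"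
          unfolding W_def DD_def by (simp add: matrix_mul_assoc)
        also have "\<dots> = R ** Ri"
          using minv_lr[OF assms(2)] minv_lr[OF elim(2)] by (simp add: Ai_def)
        also have "\<dots> = mat 1" unfolding Ri_def by (rule minv_lr(1)[OF assms(13)])
        finally show ?thesis .
      qed
      then have "b \<omega> = W *v V \<omega>"
        unfolding V_def by (simp add: matrix_vector_mul_assoc)
      then have "b \<omega> = 0" using V0 by simp
      then show ?case by (simp add: outer_def vec_eq_iff)
    qed
    then have "R = (\<integral>\<omega>. (0::real^'n^'n) \<partial>M)"
      unfolding assms(12)
      by (intro integral_cong_AE) (use borel_measurable_integrable[OF assms(11)] in auto)
    then have "R = 0" by simp
    then show False using assms(13) not_invertible_0[where 'n='n] by simp
  qed
  define bs where "bs = Q1 / Q2"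
  show ?thesis
  proof (intro exI[of _ bs] conjI allI impI)
    fix \<beta>
    have "resid_err M A Ahat b R \<beta> - resid_err M A Ahat b R bs = Q2 * (\<beta> - bs)\<^sup>2"
      unfolding res bs_def using Q2pos by (simp add: field_simps power2_eq_square)
    moreover have "0 \<le> Q2 * (\<beta> - bs)\<^sup>2" using Q2nn by simp
    ultimately show "resid_err M A Ahat b R bs \<le> resid_err M A Ahat b R \<beta>" by linarith
  next
    fix bs'
    assume min: "\<forall>\<beta>. resid_err M A Ahat b R bs' \<le> resid_err M A Ahat b R \<beta>"
    show "0 \<le> bs'"
    proof (rule ccontr)
      assume neg: "\<not> 0 \<le> bs'"
      have "resid_err M A Ahat b R bs' \<le> resid_err M A Ahat b R 0" using min by blast
      then have le: "- 2 * bs' * Q1 + bs'\<^sup>2 * Q2 \<le> 0" unfolding res by simp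
      have "0 \<le> - 2 * bs' * Q1" using neg Q1nn by (simp add: mult_nonpos_nonneg)
      moreover have "0 < bs'\<^sup>2 * Q2" using neg Q2pos by simp
      ultimately show False using le by linarith
    qed
  qed
qed

end
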